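(* Let $m<k$ be positive integers with $\gcd(m,k)=1$, $t\ge2$ an integer, and $n=tk$ (without offset) or $n=2(tk-m)$ (with offset); let $w=k$ (without offset) or $w=n/2$ (with offset). For each $0\le i<w$, the placement procedure for wedge $i$ described in the context is well-defined (for $i\ge1$, an index $j$ with $f^{i-1}_j=i$ exists, so $j^*$ is defined). Moreover, if $i\ge1$, the lower boundary of wedge $i$ aligns exactly with the front after placing wedge $i-1$, i.e. $\ell^i_j=f^{i-1}_{j^*+j}$ for all $j\ge0$. Finally, the front after placing wedge $i$ satisfies $f^i_j=s^{i+1}_j$ for all $j\ge0$.
   Context: Let $\vec v_i=(\cos\frac{2\pi i}{n},\sin\frac{2\pi i}{n})$. Wedge $0$ is a region tiled by translates of a fixed polygon (the prototile), bounded by its lower boundary, the polygonal path from the origin with successive steps $\vec v_{b_0},\vec v_{b_1},\dots$ where $b_j=\ell^0_j:=jm\bmod k$, and its upper boundary, the polygonal path from the origin with successive steps $\vec v_{u^0_j}$, where $u^0_j=jm\bmod k$ if this is nonzero and $u^0_j=k$ otherwise. Its base edge is the first segment of the lower boundary. Set $\ell^i_j=\ell^0_j+i$ and $u^i_j=u^0_j+i$. Placement: the front after wedge $0$ has direction sequence $f^0_j=u^0_j$. For $i\ge1$, let $j^*$ be the minimal index with $f^{i-1}_{j^*}=i$; wedge $i$ is wedge $0$ rotated counterclockwise by $\frac{2\pi i}{n}$ about the origin and translated by $\sum_{j=0}^{j^*-1}\vec v_{f^{i-1}_j}$ (so its base edge coincides with the first front edge in direction $i$); its lower and upper boundaries have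 direction sequences $(\ell^i_j)$ and $(u^i_j)$. The new front (upper boundary of the region covered so far, starting at the origin) has direction sequence $f^i_j=f^{i-1}_j$ for $j<j^*$ and $f^i_{j^*+j}=u^i_j$ for $j\ge0$. Shifted modular progression: $s^0_j=jm\bmod k$, and $s^{i+1}_j=s^i_j+k$ if $s^i_j=i$, $s^{i+1}_j=s^i_j$ otherwise. *)

theory Defs
  imports Main
begin

text \<open>Direction indices (naturals; the direction vector for index d is
  (cos(2 pi d/n), sin(2 pi d/n)), so only the index sequences matter).\<close>

definition lower0 :: "nat \<Rightarrow> nat \<Rightarrow> nat \<Rightarrow> nat" where
  "lower0 m k j = (j * m) mod k"

definition upper0 :: "nat \<Rightarrow> nat \<Rightarrow> nat \<Rightarrow> nat" where
  "upper0 m k j = (if (j * m) mod k \<noteq> 0 then (j * m) mod k else k)"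

definition lowerw :: "nat \<Rightarrow> nat \<Rightarrow> nat \<Rightarrow> nat \<Rightarrow> nat" where
  "lowerw m k i j = lower0 m k j + i"

definition upperw :: "nat \<Rightarrow> nat \<Rightarrow> nat \<Rightarrow> nat \<Rightarrow> nat" where
  "upperw m k i j = upper0 m k j + i"

fun front :: "nat \<Rightarrow> nat \<Rightarrow> nat \<Rightarrow> nat \<Rightarrow> nat" where
  "front m k 0 j = upperw m k 0 j"
| "front m k (Suc i) j =
     (let js = (LEAST j'. front m k i j' = Suc i)
      in if j < js then front m k i j else upperw m k (Suc i) (j - js))"

definition jstar :: "nat \<Rightarrow> nat \<Rightarrow> nat \<Rightarrow> nat" where
  "jstar m k i = (LEAST j. front m k (i - 1) j = i)"

fun shifted :: "nat \<Rightarrow> nat \<Rightarrow> nat \<Rightarrow> nat \<Rightarrow> nat" where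
  "shifted m k 0 j = (j * m) mod k"
| "shifted m k (Suc i) j =
     (if shifted m k i j = i then shifted m k i j + k else shifted m k i j)"

end

theory Submission
  imports Defs
begin

lemma shifted_inv:
  assumes "0 < k"
  shows "i \<le> shifted m k i j \<and> shifted m k i j < i + k \<and> shifted m k i j mod k = (j * m) mod k"
proof (induction i)
  case 0
  then show ?case using assms by simp
next
  case (Suc i)
  show ?case
  proof (cases "shifted m k i j = i")
    case True
    then show ?thesis using Suc by simp
  next
    case False
    then show ?thesis using Suc by simp
  qed
qed

lemma uniq_mod:
  fixes a b i k :: nat
  assumes "i \<le> a" "a < i + k" "i \<le> b" "b < i + k" "a mod k = b mod k"
  shows "a = b"
proof (cases "a \<le> b")
  case True
  then have "k dvd b - a" using assms(5) mod_eq_dvd_iff_nat by metis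
  moreover have "b - a < k" using assms by linarith
  ultimately show ?thesis using True by (metis dvd_imp_le le_antisym le_diff_iff' not_le zero_less_diff diff_is_0_eq)
next
  case False
  then have "k dvd a - b" using assms(5) mod_eq_dvd_iff_nat by (metis nle_le)
  moreover have "a - b < k" using assms by linarith
  ultimately show ?thesis using False by (metis dvd_imp_le not_le zero_less_diff)
qed

lemma shifted_exists:
  assumes "0 < k" "coprime m k" "0 < m"
  shows "\<exists>j. shifted m k i j = i"
proof -
  have m0: "m \<noteq> 0" using assms(3) by simp
  obtain x y where xy: "m * x = k * y + gcd m k" using bezout_nat[OF m0] by blast
  hence xy1: "m * x = k * y + 1" using assms(2) by simp
  define j where "j = x * i"
  have "j * m = (m * x) * i" by (simp add: j_def algebra_simps)
  also have "\<dots> = (k * y + 1) * i" using xy1 by simp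
  also have "\<dots> = k * (y * i) + i" by (simp add: algebra_simps)
  finally have "j * m = k * (y * i) + i" .
  hence e: "(j * m) mod k = i mod k" by simp
  have "shifted m k i j = i"
  proof (rule uniq_mod[where i=i and k=k])
    have h: "i \<le> shifted m k i j \<and> shifted m k i j < i + k \<and> shifted m k i j mod k = j * m mod k"
      using shifted_inv[OF assms(1)] .
    show "i \<le> shifted m k i j" using h by blast
    show "shifted m k i j < i + k" using h by blast
    show "i \<le> i" by (rule order_refl)
    show "i < i + k" using assms(1) by simp
    show "shifted m k i j mod k = i mod k" using h e by simp
  qed
  then show ?thesis by blast
qed

lemma least_props:
  fixes i :: nat
  assumes "0 < k" "coprime m k" "0 < m"
  defines "L \<equiv> (LEAST j. shifted m k i j = i)"
  shows "shifted m k i L = i" "(L * m) mod k = i mod k"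
    "\<And>j. j < L \<Longrightarrow> shifted m k i j \<noteq> i"
proof -
  show s: "shifted m k i L = i" unfolding L_def
    by (rule LeastI_ex) (rule shifted_exists[OF assms(1,2,3)])
  have h: "shifted m k i L mod k = L * m mod k"
    using shifted_inv[OF assms(1), of i m L] by blast
  show "(L * m) mod k = i mod k" using h unfolding s by simp
  show "\<And>j. j < L \<Longrightarrow> shifted m k i j \<noteq> i" unfolding L_def by (rule not_less_Least)
qed

lemma front_shifted:
  assumes "0 < k" "coprime m k" "0 < m"
  shows "front m k i j = shifted m k (i + 1) j"
proof (induction i arbitrary: j)
  case 0
  then show ?case by (simp add: upperw_def upper0_def)
next
  case (Suc i)
  have fe: "front m k i = shifted m k (Suc i)" using Suc by auto
  define L where "L = (LEAST j. shifted m k (Suc i) j = Suc i)"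
  note P = least_props[OF assms, where i="Suc i", folded L_def]
  have fr: "front m k (Suc i) j = (if j < L then shifted m k (Suc i) j else upperw m k (Suc i) (j - L))"
    by (simp add: fe L_def Let_def)
  show ?case
  proof (cases "j < L")
    case True
    then show ?thesis using fr P(3)[OF True] by simp
  next
    case False
    let ?u = "upper0 m k (j - L)"
    have u1: "1 \<le> ?u" "?u \<le> k" using assms(1) by (auto simp: upper0_def)
    have um: "?u mod k = ((j - L) * m) mod k" by (auto simp: upper0_def)
    have "(?u + Suc i) mod k = ((j - L) * m + L * m) mod k"
      using um P(2) by (metis mod_add_eq)
    also have "(j - L) * m + L * m = j * m" using False
      by (metis add_mult_distrib le_add_diff_inverse2 not_less)
    finally have me: "(?u + Suc i) mod k = (j * m) mod k" .
    have h: "Suc (Suc i) \<le> shifted m k (Suc (Suc i)) j \<and> shifted m k (Suc (Suc i)) j < Suc (Suc i) + k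
       \<and> shifted m k (Suc (Suc i)) j mod k = j * m mod k"
      using shifted_inv[OF assms(1)] .
    have "?u + Suc i = shifted m k (Suc (Suc i)) j"
    proof (rule uniq_mod[where i="Suc (Suc i)" and k=k])
      show "Suc (Suc i) \<le> ?u + Suc i" using u1 by linarith
      show "?u + Suc i < Suc (Suc i) + k" using u1 by linarith
      show "Suc (Suc i) \<le> shifted m k (Suc (Suc i)) j" using h by blast
      show "shifted m k (Suc (Suc i)) j < Suc (Suc i) + k" using h by blast
      show "(?u + Suc i) mod k = shifted m k (Suc (Suc i)) j mod k" using h me by simp
    qed
    then show ?thesis using fr False by (simp add: upperw_def)
  qed
qed

theorem mainTheorem2:
  fixes m k t n w i :: nat and offset :: bool
  assumes "0 < m" "m < k" "coprime m k" "t \<ge> 2"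
    and "n = (if offset then 2 * (t * k - m) else t * k)"
    and "w = (if offset then n div 2 else k)"
    and "i < w"
  shows "(1 \<le> i \<longrightarrow> (\<exists>j. front m k (i - 1) j = i))
       \<and> (1 \<le> i \<longrightarrow> (\<forall>j. lowerw m k i j = front m k (i - 1) (jstar m k i + j)))
       \<and> (\<forall>j. front m k i j = shifted m k (i + 1) j)"
proof -
  have k: "0 < k" using assms by simp
  note FS = front_shifted[OF k assms(3) assms(1)]
  have A: "1 \<le> i \<longrightarrow> (\<exists>j. front m k (i - 1) j = i)"
  proof
    assume i1: "1 \<le> i"
    have fe0: "front m k (i - 1) = shifted m k (i - 1 + 1)" by (rule ext) (rule FS)
    have fe: "front m k (i - 1) = shifted m k i" using fe0 i1 by simp
    show "\<exists>j. front m k (i - 1) j = i" unfolding fe by (rule shifted_exists[OF k assms(3) assms(1)])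
  qed
  have B: "1 \<le> i \<longrightarrow> (\<forall>j. lowerw m k i j = front m k (i - 1) (jstar m k i + j))"
  proof (intro impI allI)
    fix j assume i1: "1 \<le> i"
    have fe0: "front m k (i - 1) = shifted m k (i - 1 + 1)" by (rule ext) (rule FS)
    have fe: "front m k (i - 1) = shifted m k i" using fe0 i1 by simp
    define L where "L = (LEAST j. shifted m k i j = i)"
    note P = least_props[OF k assms(3) assms(1), where i=i, folded L_def]
    have js: "jstar m k i = L" unfolding jstar_def L_def fe by (rule refl)
    have "(lower0 m k j + i) mod k = (j * m + L * m) mod k"
      using P(2) by (metis lower0_def mod_add_eq mod_mod_trivial)
    also have "j * m + L * m = (L + j) * m" by (simp add: algebra_simps)
    finally have me: "(lower0 m k j + i) mod k = ((L + j) * m) mod k" .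
    have h: "i \<le> shifted m k i (L + j) \<and> shifted m k i (L + j) < i + k
       \<and> shifted m k i (L + j) mod k = (L + j) * m mod k"
      using shifted_inv[OF k] .
    have lk: "lower0 m k j < k" using k by (simp add: lower0_def)
    have "lower0 m k j + i = shifted m k i (L + j)"
    proof (rule uniq_mod[where i=i and k=k])
      show "i \<le> lower0 m k j + i" by simp
      show "lower0 m k j + i < i + k" using lk by linarith
      show "i \<le> shifted m k i (L + j)" using h by blast
      show "shifted m k i (L + j) < i + k" using h by blast
      show "(lower0 m k j + i) mod k = shifted m k i (L + j) mod k" using h me by simp
    qed
    then show "lowerw m k i j = front m k (i - 1) (jstar m k i + j)"
      unfolding lowerw_def js fe .
  qed
  show ?thesis using A B FS by blast
qed

end
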